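(* Let $G$ be a $k$-degenerate graph with maximum degree $\Delta(G)$ and let $H$ be an $l$-degenerate graph. Then $AT(G+_Q H)\le \max\{2\Delta(G)-2,\,k+l\}+1$.
   Context: A graph is $k$-degenerate if its vertices can be successively deleted so that each deleted vertex has degree at most $k$ at the time of deletion. For an orientation $D$, a subdigraph is Eulerian if every vertex has equal in- and outdegree in it; $D$ is an AT-orientation if the numbers of Eulerian subgraphs with an even and with an odd number of arcs differ; $AT(G)$ is the smallest $k$ such that $G$ has an AT-orientation of maximum outdegree at most $k-1$. $Q(G)$ has vertex set $V(G)\cup E(G)$: it is $S(G)$ (each edge $e=xy$ replaced by the path $x\,e\,y$) plus edges $ee'$ whenever edges $e,e'$ are adjacent in $G$. $G+_Q H$ has vertex set $(V(G)\cup E(G))\times V(H)$, with $(u_1,u_2)\sim(v_1,v_2)$ iff [$u_1=v_1\in V(G)$ and $u_2v_2\in E(H)$] or [$u_2=v_2$ and $u_1v_1\in E(Q(G))$]. *)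

theory Defs
  imports Main
begin

type_synonym 'a ugraph = "'a set \<times> 'a set set"

abbreviation verts :: "'a ugraph \<Rightarrow> 'a set" where "verts G \<equiv> fst G"
abbreviation edges :: "'a ugraph \<Rightarrow> 'a set set" where "edges G \<equiv> snd G"

definition graph :: "'a ugraph \<Rightarrow> bool" where
  "graph G \<longleftrightarrow> finite (verts G) \<and>
     (\<forall>e\<in>edges G. \<exists>x y. x \<noteq> y \<and> x \<in> verts G \<and> y \<in> verts G \<and> e = {x, y})"

definition deg :: "'a ugraph \<Rightarrow> 'a \<Rightarrow> nat" where
  "deg G v = card {u \<in> verts G. {u, v} \<in> edges G}"

definition max_deg :: "'a ugraph \<Rightarrow> nat" where
  "max_deg G = (if verts G = {} then 0 else Max (deg G ` verts G))"

text \<open>k-degenerate: the vertices can be deleted one after another (in the order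
of the list vs) such that each deleted vertex has degree at most k in the graph
that remains at the time of its deletion (i.e. among itself and later vertices).\<close>
definition degenerate :: "nat \<Rightarrow> 'a ugraph \<Rightarrow> bool" where
  "degenerate k G \<longleftrightarrow> (\<exists>vs. distinct vs \<and> set vs = verts G \<and>
     (\<forall>i < length vs. card {j. i < j \<and> j < length vs \<and> {vs ! i, vs ! j} \<in> edges G} \<le> k))"

definition orientation :: "'a ugraph \<Rightarrow> ('a \<times> 'a) set \<Rightarrow> bool" where
  "orientation G D \<longleftrightarrow> (\<forall>(x, y)\<in>D. {x, y} \<in> edges G) \<and>
     (\<forall>x y. {x, y} \<in> edges G \<longrightarrow> ((x, y) \<in> D \<longleftrightarrow> (y, x) \<notin> D))"

definition outdeg :: "('a \<times> 'a) set \<Rightarrow> 'a \<Rightarrow> nat" where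
  "outdeg D v = card {u. (v, u) \<in> D}"

definition indeg :: "('a \<times> 'a) set \<Rightarrow> 'a \<Rightarrow> nat" where
  "indeg D v = card {u. (u, v) \<in> D}"

definition eulerian_subgraphs :: "('a \<times> 'a) set \<Rightarrow> ('a \<times> 'a) set set" where
  "eulerian_subgraphs D = {S. S \<subseteq> D \<and> (\<forall>v. indeg S v = outdeg S v)}"

definition AT_orientation :: "'a ugraph \<Rightarrow> ('a \<times> 'a) set \<Rightarrow> bool" where
  "AT_orientation G D \<longleftrightarrow> orientation G D \<and>
     card {S \<in> eulerian_subgraphs D. even (card S)} \<noteq> card {S \<in> eulerian_subgraphs D. odd (card S)}"

definition AT :: "'a ugraph \<Rightarrow> nat" where
  "AT G = (LEAST k. \<exists>D. AT_orientation G D \<and> (\<forall>v\<in>verts G. outdeg D v + 1 \<le> k))"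

definition Qgraph :: "'a ugraph \<Rightarrow> ('a + 'a set) ugraph" where
  "Qgraph G = (Inl ` verts G \<union> Inr ` edges G,
     {{Inl x, Inr e} | x e. e \<in> edges G \<and> x \<in> e} \<union>
     {{Inr e, Inr e'} | e e'. e \<in> edges G \<and> e' \<in> edges G \<and> e \<noteq> e' \<and> e \<inter> e' \<noteq> {}})"

definition Qprod :: "'a ugraph \<Rightarrow> 'b ugraph \<Rightarrow> (('a + 'a set) \<times> 'b) ugraph" where
  "Qprod G H = (verts (Qgraph G) \<times> verts H,
     {{(Inl v, u2), (Inl v, v2)} | v u2 v2. v \<in> verts G \<and> {u2, v2} \<in> edges H} \<union>
     {{(u1, w), (v1, w)} | u1 v1 w. w \<in> verts H \<and> {u1, v1} \<in> edges (Qgraph G)})"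

end

theory Submission
  imports Defs "HOL-Library.Product_Lexorder"
begin

lemma acyclic_AT:
  fixes \<Gamma> :: "'v ugraph" and key :: "'v \<Rightarrow> 'k::linorder"
  assumes fin: "finite (verts \<Gamma>)"
    and sub: "\<forall>e\<in>edges \<Gamma>. e \<subseteq> verts \<Gamma>"
    and dist: "\<forall>a b. {a,b} \<in> edges \<Gamma> \<longrightarrow> key a \<noteq> key b"
    and bound: "\<forall>v\<in>verts \<Gamma>. card {u. {v,u} \<in> edges \<Gamma> \<and> key v < key u} \<le> d"
  shows "AT \<Gamma> \<le> d + 1"
proof -
  define D where "D = {(a,b). {a,b} \<in> edges \<Gamma> \<and> key a < key b}"
  have Dsub: "D \<subseteq> verts \<Gamma> \<times> verts \<Gamma>" using sub by (auto simp: D_def)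
  have finD: "finite D" using Dsub fin finite_subset by blast
  have ori: "orientation \<Gamma> D"
    unfolding orientation_def D_def using dist
    apply (auto simp: insert_commute)
    by (metis linorder_neqE)
  have eul: "eulerian_subgraphs D = {{}}"
  proof
    show "{{}} \<subseteq> eulerian_subgraphs D" by (auto simp: eulerian_subgraphs_def indeg_def outdeg_def)
    show "eulerian_subgraphs D \<subseteq> {{}}"
    proof
      fix S assume S: "S \<in> eulerian_subgraphs D"
      have SD: "S \<subseteq> D" and bal: "\<And>v. indeg S v = outdeg S v" using S by (auto simp: eulerian_subgraphs_def)
      have finS: "finite S" using SD finD finite_subset by blast
      show "S \<in> {{}}"
      proof (rule ccontr)
        assume "S \<notin> {{}}" then have ne: "S \<noteq> {}" by simp
        define m where "m = Max ((\<lambda>p. key (snd p)) ` S)"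
        have "m \<in> (\<lambda>p. key (snd p)) ` S" unfolding m_def using finS ne by (intro Max_in) auto
        then obtain a b where ab: "(a,b) \<in> S" "key b = m" by auto
        have "{u. (u,b) \<in> S} \<subseteq> fst ` S" by force
        then have "finite {u. (u,b) \<in> S}" using finS finite_subset by blast
        moreover have "{u. (u,b) \<in> S} \<noteq> {}" using ab by auto
        ultimately have "indeg S b > 0" by (simp add: indeg_def card_gt_0_iff)
        hence "outdeg S b > 0" using bal by simp
        then obtain c where bc: "(b,c) \<in> S" unfolding outdeg_def by (metis card_gt_0_iff empty_Collect_eq)
        hence "key b < key c" using SD D_def by auto
        moreover have "key c \<le> m" unfolding m_def using finS bc by (intro Max_ge) force+
        ultimately show False using ab by simp
      qed
    qed
  qed
  have e1: "{S \<in> eulerian_subgraphs D. even (card S)} = {{}}" unfolding eul by auto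
  have e2: "{S \<in> eulerian_subgraphs D. odd (card S)} = {}" unfolding eul by auto
  have "AT_orientation \<Gamma> D" unfolding AT_orientation_def e1 e2 using ori by simp
  moreover have "\<forall>v\<in>verts \<Gamma>. outdeg D v + 1 \<le> d+1" using bound by (simp add: outdeg_def D_def)
  ultimately show ?thesis unfolding AT_def by (intro Least_le) blast
qed

lemma degenerate_rank:
  assumes "degenerate k G"
  shows "\<exists>r::'a\<Rightarrow>nat. inj_on r (verts G) \<and>
     (\<forall>v\<in>verts G. card {u\<in>verts G. {v,u} \<in> edges G \<and> r v < r u} \<le> k)"
proof -
  obtain vs where vs: "distinct vs" "set vs = verts G"
    "\<forall>i < length vs. card {j. i < j \<and> j < length vs \<and> {vs ! i, vs ! j} \<in> edges G} \<le> k"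
    using assms unfolding degenerate_def by blast
  define r where "r v = (THE i. i < length vs \<and> vs!i = v)" for v
  have rv: "r v < length vs \<and> vs ! r v = v" if "v \<in> verts G" for v
    unfolding r_def using theI'[OF distinct_Ex1[OF vs(1), of v]] that vs(2) by blast
  have "inj_on r (verts G)" by (metis rv inj_onI)
  moreover have "card {u\<in>verts G. {v,u} \<in> edges G \<and> r v < r u} \<le> k" if v: "v \<in> verts G" for v
  proof -
    have "{u\<in>verts G. {v,u} \<in> edges G \<and> r v < r u} \<subseteq> (!) vs ` {j. r v < j \<and> j < length vs \<and> {vs ! r v, vs ! j} \<in> edges G}"
    proof
      fix u assume u: "u \<in> {u\<in>verts G. {v,u} \<in> edges G \<and> r v < r u}"
      then show "u \<in> (!) vs ` {j. r v < j \<and> j < length vs \<and> {vs ! r v, vs ! j} \<in> edges G}"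
        using rv[of u] rv[OF v] by (intro image_eqI[of _ _ "r u"]) auto
    qed
    then have "card {u\<in>verts G. {v,u} \<in> edges G \<and> r v < r u} \<le> card ((!) vs ` {j. r v < j \<and> j < length vs \<and> {vs ! r v, vs ! j} \<in> edges G})"
      by (intro card_mono) auto
    also have "\<dots> \<le> card {j. r v < j \<and> j < length vs \<and> {vs ! r v, vs ! j} \<in> edges G}" by (rule card_image_le) auto
    also have "\<dots> \<le> k" using vs(3) rv[OF v] by blast
    finally show ?thesis .
  qed
  ultimately show ?thesis by blast
qed

lemma graph_edge:
  assumes "graph G" "e \<in> edges G"
  obtains x y where "x \<noteq> y" "x \<in> verts G" "y \<in> verts G" "e = {x,y}"
  using assms unfolding graph_def by metis

lemma finite_edges:
  assumes "graph G" shows "finite (edges G)"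
proof -
  have "edges G \<subseteq> Pow (verts G)" using assms unfolding graph_def by auto
  then show ?thesis using assms unfolding graph_def by (meson finite_Pow_iff finite_subset)
qed

lemma inc_card:
  assumes "graph G" "v \<in> verts G"
  shows "finite {e\<in>edges G. v\<in>e} \<and> card {e\<in>edges G. v\<in>e} \<le> max_deg G"
proof -
  have fin: "finite {e\<in>edges G. v\<in>e}" using finite_edges[OF assms(1)] by simp
  have "{e\<in>edges G. v\<in>e} \<subseteq> (\<lambda>u. {u,v}) ` {u \<in> verts G. {u, v} \<in> edges G}"
  proof
    fix e assume e: "e \<in> {e\<in>edges G. v\<in>e}"
    then obtain x y where xy: "x \<noteq> y" "x \<in> verts G" "y \<in> verts G" "e = {x,y}"
      using graph_edge[OF assms(1)] by blast
    show "e \<in> (\<lambda>u. {u,v}) ` {u \<in> verts G. {u, v} \<in> edges G}"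
    proof (cases "v = x")
      case True then show ?thesis using e xy by (intro image_eqI[of _ _ y]) (auto simp: insert_commute)
    next
      case False then show ?thesis using e xy by (intro image_eqI[of _ _ x]) auto
    qed
  qed
  then have "card {e\<in>edges G. v\<in>e} \<le> card ((\<lambda>u. {u,v}) ` {u \<in> verts G. {u, v} \<in> edges G})"
    by (intro card_mono) (auto intro: finite_imageI simp: assms(1)[unfolded graph_def])
  also have "\<dots> \<le> deg G v" unfolding deg_def by (rule card_image_le) (simp add: assms(1)[unfolded graph_def])
  also have "\<dots> \<le> max_deg G" unfolding max_deg_def using assms by (auto simp: graph_def)
  finally show ?thesis using fin by simp
qed

lemma Qedge_Inl:
  "{Inl v, q'} \<in> edges (Qgraph G) \<longleftrightarrow> (\<exists>e. q' = Inr e \<and> e \<in> edges G \<and> v \<in> e)"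
  unfolding Qgraph_def by (auto simp: doubleton_eq_iff)

lemma Qedge_Inr:
  "{Inr e, q'} \<in> edges (Qgraph G) \<longleftrightarrow> e \<in> edges G \<and> ((\<exists>x. q' = Inl x \<and> x \<in> e) \<or>
     (\<exists>e'. q' = Inr e' \<and> e' \<in> edges G \<and> e' \<noteq> e \<and> e \<inter> e' \<noteq> {}))"
  unfolding Qgraph_def by (auto simp: doubleton_eq_iff)

lemma Qedge_cases:
  assumes "{q, q'} \<in> edges (Qgraph G)"
  shows "(\<exists>v. q = Inl v \<and> (\<exists>e. q' = Inr e \<and> e \<in> edges G \<and> v \<in> e)) \<or>
         (\<exists>e. q = Inr e \<and> e \<in> edges G \<and> ((\<exists>x. q' = Inl x \<and> x \<in> e) \<or>
     (\<exists>e'. q' = Inr e' \<and> e' \<in> edges G \<and> e' \<noteq> e \<and> e \<inter> e' \<noteq> {})))"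
proof (cases q)
  case (Inl v) then show ?thesis using assms Qedge_Inl[of v q' G] by simp
next
  case (Inr e) then show ?thesis using assms Qedge_Inr[of e q' G] by simp
qed

lemma Qedges_sub:
  assumes "graph G" shows "\<forall>e\<in>edges (Qgraph G). e \<subseteq> verts (Qgraph G)"
proof
  fix e assume e: "e \<in> edges (Qgraph G)"
  have "x \<in> verts G" if "x \<in> f" "f \<in> edges G" for x f
    using graph_edge[OF assms that(2)] that(1) by auto
  then show "e \<subseteq> verts (Qgraph G)" using e unfolding Qgraph_def by auto
qed

lemma card_le_via:
  assumes "S \<subseteq> T" "finite T" "card T \<le> n" shows "card S \<le> n"
  using assms card_mono le_trans by blast

lemma Q_rank_big:
  assumes G: "graph G" and kD: "max_deg G \<le> k"
  shows "\<exists>rQ :: ('a + 'a set) \<Rightarrow> nat \<times> nat \<times> nat.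
     (\<forall>q q'. {q,q'} \<in> edges (Qgraph G) \<longrightarrow> rQ q \<noteq> rQ q') \<and>
     (\<forall>v\<in>verts G. card {q'. {Inl v,q'} \<in> edges (Qgraph G) \<and> rQ (Inl v) < rQ q'} \<le> k) \<and>
     (\<forall>e\<in>edges G. card {q'. {Inr e,q'} \<in> edges (Qgraph G) \<and> rQ (Inr e) < rQ q'} \<le> 2 * max_deg G - 2)"
proof -
  obtain f :: "'a set \<Rightarrow> nat" where f: "inj_on f (edges G)"
    using finite_imp_inj_to_nat_seg[OF finite_edges[OF G]] by blast
  define rQ :: "('a + 'a set) \<Rightarrow> nat \<times> nat \<times> nat" where
    "rQ = case_sum (\<lambda>v. (0,0,0)) (\<lambda>e. (1, f e, 0))"
  have d: "\<forall>q q'. {q,q'} \<in> edges (Qgraph G) \<longrightarrow> rQ q \<noteq> rQ q'"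
  proof (intro allI impI)
    fix q q' assume "{q,q'} \<in> edges (Qgraph G)"
    then consider (a) v e where "q = Inl v" "q' = Inr e"
      | (b) e x where "q = Inr e" "q' = Inl x"
      | (c) e e' where "q = Inr e" "q' = Inr e'" "e \<in> edges G" "e' \<in> edges G" "e' \<noteq> e"
      using Qedge_cases[of q q' G] by blast
    then show "rQ q \<noteq> rQ q'"
    proof cases
      case a then show ?thesis unfolding rQ_def by simp
    next
      case b then show ?thesis unfolding rQ_def by simp
    next
      case c then show ?thesis unfolding rQ_def using inj_onD[OF f] by fastforce
    qed
  qed
  have l1: "card {q'. {Inl v,q'} \<in> edges (Qgraph G) \<and> rQ (Inl v) < rQ q'} \<le> k" if v: "v \<in> verts G" for v
  proof (rule card_le_via)
    show "{q'. {Inl v,q'} \<in> edges (Qgraph G) \<and> rQ (Inl v) < rQ q'} \<subseteq> Inr ` {e\<in>edges G. v\<in>e}"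
      using Qedge_Inl[of v _ G] by auto
    show "finite ((Inr :: 'a set \<Rightarrow> 'a + 'a set) ` {e\<in>edges G. v\<in>e})" using inc_card[OF G v] by simp
    have "card ((Inr :: 'a set \<Rightarrow> 'a + 'a set) ` {e\<in>edges G. v\<in>e}) \<le> card {e\<in>edges G. v\<in>e}" by (rule card_image_le) (use inc_card[OF G v] in simp)
    then show "card ((Inr :: 'a set \<Rightarrow> 'a + 'a set) ` {e\<in>edges G. v\<in>e}) \<le> k" using conjunct2[OF inc_card[OF G v]] kD by linarith
  qed
  have l2: "card {q'. {Inr e,q'} \<in> edges (Qgraph G) \<and> rQ (Inr e) < rQ q'} \<le> 2 * max_deg G - 2" if e: "e \<in> edges G" for e
  proof -
    obtain a b where ab: "a \<noteq> b" "a \<in> verts G" "b \<in> verts G" "e = {a,b}" using graph_edge[OF G e] by blast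
    define A where "A = {e'\<in>edges G. a\<in>e'}"
    define B where "B = {e'\<in>edges G. b\<in>e'}"
    have A: "finite A" "card A \<le> max_deg G" "e \<in> A" using inc_card[OF G ab(2)] e ab unfolding A_def by auto
    have B: "finite B" "card B \<le> max_deg G" "e \<in> B" using inc_card[OF G ab(3)] e ab unfolding B_def by auto
    show ?thesis
    proof (rule card_le_via)
      show "{q'. {Inr e,q'} \<in> edges (Qgraph G) \<and> rQ (Inr e) < rQ q'} \<subseteq> Inr ` ((A - {e}) \<union> (B - {e}))"
      proof
        fix q' assume q': "q' \<in> {q'. {Inr e,q'} \<in> edges (Qgraph G) \<and> rQ (Inr e) < rQ q'}"
        then have E: "{Inr e,q'} \<in> edges (Qgraph G)" and lt: "rQ (Inr e) < rQ q'" by auto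
        have "\<not> (\<exists>x. q' = Inl x)" using lt unfolding rQ_def by auto
        then obtain e' where e': "q' = Inr e'" "e' \<in> edges G" "e' \<noteq> e" "e \<inter> e' \<noteq> {}"
          using E Qedge_Inr[of e q' G] by blast
        then have "a \<in> e' \<or> b \<in> e'" using ab(4) by blast
        then have "e' \<in> (A - {e}) \<union> (B - {e})" using e' unfolding A_def B_def by blast
        then show "q' \<in> Inr ` ((A - {e}) \<union> (B - {e}))" using e'(1) by blast
      qed
      show "finite ((Inr :: 'a set \<Rightarrow> 'a + 'a set) ` ((A - {e}) \<union> (B - {e})))" using A B by simp
      have "card ((Inr :: 'a set \<Rightarrow> 'a + 'a set) ` ((A - {e}) \<union> (B - {e}))) \<le> card ((A - {e}) \<union> (B - {e}))" by (rule card_image_le) (use A B in simp)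
      also have "\<dots> \<le> card (A - {e}) + card (B - {e})" by (rule card_Un_le)
      also have "\<dots> = (card A - 1) + (card B - 1)" using A B by simp
      also have "\<dots> \<le> 2 * max_deg G - 2" using A(2) B(2) by linarith
      finally show "card ((Inr :: 'a set \<Rightarrow> 'a + 'a set) ` ((A - {e}) \<union> (B - {e}))) \<le> 2 * max_deg G - 2" .
    qed
  qed
  show ?thesis using d l1 l2 by blast
qed

lemma Q_rank_small:
  assumes G: "graph G" and dg: "degenerate k G" and kD: "k < max_deg G"
  shows "\<exists>rQ :: ('a + 'a set) \<Rightarrow> nat \<times> nat \<times> nat.
     (\<forall>q q'. {q,q'} \<in> edges (Qgraph G) \<longrightarrow> rQ q \<noteq> rQ q') \<and>
     (\<forall>v\<in>verts G. card {q'. {Inl v,q'} \<in> edges (Qgraph G) \<and> rQ (Inl v) < rQ q'} \<le> k) \<and>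
     (\<forall>e\<in>edges G. card {q'. {Inr e,q'} \<in> edges (Qgraph G) \<and> rQ (Inr e) < rQ q'} \<le> 2 * max_deg G - 2)"
proof -
  obtain f :: "'a set \<Rightarrow> nat" where f: "inj_on f (edges G)"
    using finite_imp_inj_to_nat_seg[OF finite_edges[OF G]] by blast
  obtain r :: "'a \<Rightarrow> nat" where r: "inj_on r (verts G)"
    "\<forall>v\<in>verts G. card {u\<in>verts G. {v,u} \<in> edges G \<and> r v < r u} \<le> k"
    using degenerate_rank[OF dg] by blast
  define rQ :: "('a + 'a set) \<Rightarrow> nat \<times> nat \<times> nat" where
    "rQ = case_sum (\<lambda>v. (r v,1,0)) (\<lambda>e. (Max (r ` e), 0, f e))"
  define Fwd where "Fwd v = {e'\<in>edges G. v \<in> e' \<and> r v < Max (r ` e')}" for v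
  have Fwd: "finite (Fwd v) \<and> card (Fwd v) \<le> k" if v: "v \<in> verts G" for v
  proof -
    have fin: "finite (Fwd v)" unfolding Fwd_def using finite_edges[OF G] by simp
    have "Fwd v \<subseteq> (\<lambda>u. {v,u}) ` {u\<in>verts G. {v,u} \<in> edges G \<and> r v < r u}"
    proof
      fix e' assume e': "e' \<in> Fwd v"
      then have e'E: "e' \<in> edges G" "v \<in> e'" "r v < Max (r ` e')" unfolding Fwd_def by auto
      obtain x y where xy: "x \<noteq> y" "x \<in> verts G" "y \<in> verts G" "e' = {x,y}" using graph_edge[OF G e'E(1)] by blast
      show "e' \<in> (\<lambda>u. {v,u}) ` {u\<in>verts G. {v,u} \<in> edges G \<and> r v < r u}"
      proof (cases "v = x")
        case True
        then show ?thesis using xy e'E by (intro image_eqI[of _ _ y]) (auto simp: max_def split: if_splits)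
      next
        case False
        then have "v = y" using xy e'E by auto
        then show ?thesis using xy e'E by (intro image_eqI[of _ _ x]) (auto simp: max_def insert_commute split: if_splits)
      qed
    qed
    then have "card (Fwd v) \<le> card ((\<lambda>u. {v,u}) ` {u\<in>verts G. {v,u} \<in> edges G \<and> r v < r u})"
      by (intro card_mono) (auto simp: G[unfolded graph_def])
    also have "\<dots> \<le> card {u\<in>verts G. {v,u} \<in> edges G \<and> r v < r u}"
      by (rule card_image_le) (simp add: G[unfolded graph_def])
    also have "\<dots> \<le> k" using r(2) v by blast
    finally show ?thesis using fin by simp
  qed
  have d: "\<forall>q q'. {q,q'} \<in> edges (Qgraph G) \<longrightarrow> rQ q \<noteq> rQ q'"
  proof (intro allI impI)
    fix q q' assume "{q,q'} \<in> edges (Qgraph G)"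
    then consider (a) v e where "q = Inl v" "q' = Inr e"
      | (b) e x where "q = Inr e" "q' = Inl x"
      | (c) e e' where "q = Inr e" "q' = Inr e'" "e \<in> edges G" "e' \<in> edges G" "e' \<noteq> e"
      using Qedge_cases[of q q' G] by blast
    then show "rQ q \<noteq> rQ q'"
    proof cases
      case a then show ?thesis unfolding rQ_def by simp
    next
      case b then show ?thesis unfolding rQ_def by simp
    next
      case c then show ?thesis unfolding rQ_def using inj_onD[OF f] by fastforce
    qed
  qed
  have l1: "card {q'. {Inl v,q'} \<in> edges (Qgraph G) \<and> rQ (Inl v) < rQ q'} \<le> k" if v: "v \<in> verts G" for v
  proof (rule card_le_via)
    show "{q'. {Inl v,q'} \<in> edges (Qgraph G) \<and> rQ (Inl v) < rQ q'} \<subseteq> (Inr :: 'a set \<Rightarrow> 'a + 'a set) ` Fwd v"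
    proof
      fix q' assume "q' \<in> {q'. {Inl v,q'} \<in> edges (Qgraph G) \<and> rQ (Inl v) < rQ q'}"
      then have E: "{Inl v,q'} \<in> edges (Qgraph G)" and lt: "rQ (Inl v) < rQ q'" by auto
      obtain e where e: "q' = Inr e" "e \<in> edges G" "v \<in> e" using E Qedge_Inl[of v q' G] by blast
      have "r v < Max (r ` e)" using lt e(1) unfolding rQ_def by auto
      then show "q' \<in> Inr ` Fwd v" using e unfolding Fwd_def by blast
    qed
    show "finite ((Inr :: 'a set \<Rightarrow> 'a + 'a set) ` Fwd v)" using Fwd[OF v] by simp
    have "card ((Inr :: 'a set \<Rightarrow> 'a + 'a set) ` Fwd v) \<le> card (Fwd v)" by (rule card_image_le) (use Fwd[OF v] in simp)
    then show "card ((Inr :: 'a set \<Rightarrow> 'a + 'a set) ` Fwd v) \<le> k" using conjunct2[OF Fwd[OF v]] by linarith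
  qed
  have l2: "card {q'. {Inr e,q'} \<in> edges (Qgraph G) \<and> rQ (Inr e) < rQ q'} \<le> 2 * max_deg G - 2" if e: "e \<in> edges G" for e
  proof -
    obtain x y where xy: "x \<noteq> y" "x \<in> verts G" "y \<in> verts G" "e = {x,y}" using graph_edge[OF G e] by blast
    have "r x \<noteq> r y" using r(1) xy inj_onD by metis
    then obtain a b where ab: "a \<in> verts G" "b \<in> verts G" "e = {a,b}" "r a < r b"
      using xy by (metis insert_commute linorder_neqE)
    have Me: "Max (r ` e) = r b" using ab by simp
    define B where "B = {e'\<in>edges G. b\<in>e'}"
    have B: "finite B" "card B \<le> max_deg G" "e \<in> B" using inc_card[OF G ab(2)] e ab unfolding B_def by auto
    have A: "finite (Fwd a)" "card (Fwd a) \<le> k" "e \<in> Fwd a" using Fwd[OF ab(1)] e ab Me unfolding Fwd_def by auto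
    show ?thesis
    proof (rule card_le_via)
      show "{q'. {Inr e,q'} \<in> edges (Qgraph G) \<and> rQ (Inr e) < rQ q'} \<subseteq> {Inl b} \<union> (Inr :: 'a set \<Rightarrow> 'a + 'a set) ` ((Fwd a - {e}) \<union> (B - {e}))"
      proof
        fix q' assume q': "q' \<in> {q'. {Inr e,q'} \<in> edges (Qgraph G) \<and> rQ (Inr e) < rQ q'}"
        then have E: "{Inr e,q'} \<in> edges (Qgraph G)" and lt: "rQ (Inr e) < rQ q'" by auto
        from E consider (l) z where "q' = Inl z" "z \<in> e"
          | (rr) e' where "q' = Inr e'" "e' \<in> edges G" "e' \<noteq> e" "e \<inter> e' \<noteq> {}"
          using Qedge_Inr[of e q' G] by blast
        then show "q' \<in> {Inl b} \<union> Inr ` ((Fwd a - {e}) \<union> (B - {e}))"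
        proof cases
          case l
          have "r b \<le> r z" using lt l(1) Me unfolding rQ_def by auto
          then have "z = b" using l(2) ab by auto
          then show ?thesis using l by simp
        next
          case rr
          have le: "r b \<le> Max (r ` e')" using lt rr(1) Me unfolding rQ_def by auto
          show ?thesis
          proof (cases "b \<in> e'")
            case True then show ?thesis using rr unfolding B_def by blast
          next
            case False
            then have "a \<in> e'" using rr(4) ab(3) by blast
            then have "e' \<in> Fwd a" using rr le ab(4) unfolding Fwd_def by auto
            then show ?thesis using rr by blast
          qed
        qed
      qed
      show "finite ({Inl b} \<union> (Inr :: 'a set \<Rightarrow> 'a + 'a set) ` ((Fwd a - {e}) \<union> (B - {e})))" using A B by simp
      have "card ({Inl b} \<union> (Inr :: 'a set \<Rightarrow> 'a + 'a set) ` ((Fwd a - {e}) \<union> (B - {e})))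
          \<le> card {Inl b :: 'a + 'a set} + card ((Inr :: 'a set \<Rightarrow> 'a + 'a set) ` ((Fwd a - {e}) \<union> (B - {e})))" by (rule card_Un_le)
      also have "card ((Inr :: 'a set \<Rightarrow> 'a + 'a set) ` ((Fwd a - {e}) \<union> (B - {e}))) \<le> card ((Fwd a - {e}) \<union> (B - {e}))" by (rule card_image_le) (use A B in simp)
      also have "\<dots> \<le> card (Fwd a - {e}) + card (B - {e})" by (rule card_Un_le)
      also have "\<dots> = (card (Fwd a) - 1) + (card B - 1)" using A B by simp
      finally have "card ({Inl b} \<union> (Inr :: 'a set \<Rightarrow> 'a + 'a set) ` ((Fwd a - {e}) \<union> (B - {e})))
          \<le> 1 + ((card (Fwd a) - 1) + (card B - 1))" by simp
      moreover have "card (Fwd a) \<ge> 1" "card B \<ge> 1" using A B by (auto simp: card_gt_0_iff Suc_le_eq)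
      ultimately show "card ({Inl b} \<union> (Inr :: 'a set \<Rightarrow> 'a + 'a set) ` ((Fwd a - {e}) \<union> (B - {e}))) \<le> 2 * max_deg G - 2"
        using A(2) B(2) kD by linarith
    qed
  qed
  show ?thesis using d l1 l2 by blast
qed

lemma Q_rank:
  assumes G: "graph G" and dg: "degenerate k G"
  shows "\<exists>rQ :: ('a + 'a set) \<Rightarrow> nat \<times> nat \<times> nat.
     (\<forall>q q'. {q,q'} \<in> edges (Qgraph G) \<longrightarrow> rQ q \<noteq> rQ q') \<and>
     (\<forall>v\<in>verts G. card {q'. {Inl v,q'} \<in> edges (Qgraph G) \<and> rQ (Inl v) < rQ q'} \<le> k) \<and>
     (\<forall>e\<in>edges G. card {q'. {Inr e,q'} \<in> edges (Qgraph G) \<and> rQ (Inr e) < rQ q'} \<le> 2 * max_deg G - 2)"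
proof (cases "max_deg G \<le> k")
  case True then show ?thesis using Q_rank_big[OF G] by blast
next
  case False then show ?thesis using Q_rank_small[OF G dg] by simp
qed

lemma Pedge_cases:
  assumes "{p,p'} \<in> edges (Qprod G H)"
  shows "(\<exists>v w w'. p = (Inl v, w) \<and> p' = (Inl v, w') \<and> v \<in> verts G \<and> {w,w'} \<in> edges H) \<or>
         (\<exists>q q' w. p = (q,w) \<and> p' = (q',w) \<and> w \<in> verts H \<and> {q,q'} \<in> edges (Qgraph G))"
proof -
  from assms consider (a) v u2 v2 where "{p,p'} = {(Inl v, u2), (Inl v, v2)}" "v \<in> verts G" "{u2, v2} \<in> edges H"
    | (b) u1 v1 w where "{p,p'} = {(u1, w), (v1, w)}" "w \<in> verts H" "{u1, v1} \<in> edges (Qgraph G)"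
    unfolding Qprod_def by auto
  then show ?thesis
  proof cases
    case a
    then have "(p = (Inl v, u2) \<and> p' = (Inl v, v2)) \<or> (p = (Inl v, v2) \<and> p' = (Inl v, u2))"
      by (simp add: doubleton_eq_iff)
    moreover have "{v2,u2} \<in> edges H" using a by (simp add: insert_commute)
    ultimately show ?thesis using a by blast
  next
    case b
    then have "(p = (u1, w) \<and> p' = (v1, w)) \<or> (p = (v1, w) \<and> p' = (u1, w))"
      by (simp add: doubleton_eq_iff)
    moreover have "{v1,u1} \<in> edges (Qgraph G)" using b by (simp add: insert_commute)
    ultimately show ?thesis using b by blast
  qed
qed

theorem corollary3p8:
  fixes G :: "'a ugraph" and H :: "'b ugraph" and k l :: nat
  assumes "graph G" and "graph H"
    and "degenerate k G" and "degenerate l H"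
  shows "AT (Qprod G H) \<le> max (2 * max_deg G - 2) (k + l) + 1"
proof -
  note G = assms(1) and H = assms(2)
  obtain rQ :: "('a + 'a set) \<Rightarrow> nat \<times> nat \<times> nat" where rQ:
     "\<forall>q q'. {q,q'} \<in> edges (Qgraph G) \<longrightarrow> rQ q \<noteq> rQ q'"
     "\<forall>v\<in>verts G. card {q'. {Inl v,q'} \<in> edges (Qgraph G) \<and> rQ (Inl v) < rQ q'} \<le> k"
     "\<forall>e\<in>edges G. card {q'. {Inr e,q'} \<in> edges (Qgraph G) \<and> rQ (Inr e) < rQ q'} \<le> 2 * max_deg G - 2"
    using Q_rank[OF assms(1,3)] by blast
  obtain rH :: "'b \<Rightarrow> nat" where rH: "inj_on rH (verts H)"
    "\<forall>w\<in>verts H. card {u\<in>verts H. {w,u} \<in> edges H \<and> rH w < rH u} \<le> l"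
    using degenerate_rank[OF assms(4)] by blast
  define key :: "('a + 'a set) \<times> 'b \<Rightarrow> nat \<times> nat \<times> nat \<times> nat" where
    "key p = (rH (snd p), rQ (fst p))" for p
  define dd where "dd = max (2 * max_deg G - 2) (k + l)"
  have finQ: "finite (verts (Qgraph G))" using G finite_edges[OF G] unfolding Qgraph_def graph_def by simp
  have finH: "finite (verts H)" using H unfolding graph_def by simp
  have Hsub: "u \<in> verts H \<and> u' \<in> verts H \<and> u \<noteq> u'" if uu: "{u,u'} \<in> edges H" for u u'
  proof -
    obtain x y where "x \<noteq> y" "x \<in> verts H" "y \<in> verts H" "{u,u'} = {x,y}" using graph_edge[OF H uu] by blast
    then show ?thesis by (auto simp: doubleton_eq_iff)
  qed
  have Qsub: "q \<in> verts (Qgraph G) \<and> q' \<in> verts (Qgraph G)" if "{q,q'} \<in> edges (Qgraph G)" for q q'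
    using Qedges_sub[OF G] that by blast
  have fin: "finite (verts (Qprod G H))" using finQ finH unfolding Qprod_def by simp
  have sub: "\<forall>e\<in>edges (Qprod G H). e \<subseteq> verts (Qprod G H)"
  proof
    fix e assume e: "e \<in> edges (Qprod G H)"
    then consider (a) v u2 v2 where "e = {(Inl v, u2), (Inl v, v2)}" "v \<in> verts G" "{u2, v2} \<in> edges H"
      | (b) u1 v1 w where "e = {(u1, w), (v1, w)}" "w \<in> verts H" "{u1, v1} \<in> edges (Qgraph G)"
      unfolding Qprod_def by auto
    then show "e \<subseteq> verts (Qprod G H)"
    proof cases
      case a then show ?thesis using Hsub[OF a(3)] unfolding Qprod_def Qgraph_def by auto
    next
      case b then show ?thesis using Qsub[OF b(3)] unfolding Qprod_def by auto
    qed
  qed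
  have dist: "\<forall>a b. {a,b} \<in> edges (Qprod G H) \<longrightarrow> key a \<noteq> key b"
  proof (intro allI impI)
    fix a b assume "{a,b} \<in> edges (Qprod G H)"
    then consider (x) v w w' where "a = (Inl v, w)" "b = (Inl v, w')" "{w,w'} \<in> edges H"
      | (y) q q' w where "a = (q,w)" "b = (q',w)" "{q,q'} \<in> edges (Qgraph G)"
      using Pedge_cases by blast
    then show "key a \<noteq> key b"
    proof cases
      case x
      then have "rH w \<noteq> rH w'" using Hsub[OF x(3)] rH(1) inj_onD by metis
      then show ?thesis using x unfolding key_def by simp
    next
      case y then show ?thesis using rQ(1) unfolding key_def by simp
    qed
  qed
  have bound: "\<forall>p\<in>verts (Qprod G H). card {u. {p,u} \<in> edges (Qprod G H) \<and> key p < key u} \<le> dd"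
  proof
    fix p assume p: "p \<in> verts (Qprod G H)"
    obtain q w where pq: "p = (q,w)" by fastforce
    have w: "w \<in> verts H" and q: "q \<in> verts (Qgraph G)" using p pq unfolding Qprod_def by auto
    define AH where "AH = {u\<in>verts H. {w,u} \<in> edges H \<and> rH w < rH u}"
    define BQ where "BQ = {q'. {q,q'} \<in> edges (Qgraph G) \<and> rQ q < rQ q'}"
    have finA: "finite AH" using finH unfolding AH_def by simp
    have finB: "finite BQ" using finQ Qsub unfolding BQ_def by (metis (no_types, lifting) finite_subset mem_Collect_eq subsetI)
    have cA: "card ((\<lambda>w'. (q,w')) ` AH) \<le> l" using card_image_le[OF finA, of "\<lambda>w'. (q,w')"] rH(2) w unfolding AH_def by (meson order_trans)
    have cB: "card ((\<lambda>q'. (q',w)) ` BQ) \<le> card BQ" using card_image_le[OF finB] by blast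
    have later: "{u. {p,u} \<in> edges (Qprod G H) \<and> key p < key u} \<subseteq>
        {u. (\<exists>v. q = Inl v) \<and> u \<in> (\<lambda>w'. (q,w')) ` AH} \<union> (\<lambda>q'. (q',w)) ` BQ"
    proof
      fix u assume u: "u \<in> {u. {p,u} \<in> edges (Qprod G H) \<and> key p < key u}"
      then have E: "{p,u} \<in> edges (Qprod G H)" and lt: "key p < key u" by auto
      from E consider (x) v w1 w' where "p = (Inl v, w1)" "u = (Inl v, w')" "{w1,w'} \<in> edges H"
        | (y) q1 q' w1 where "p = (q1,w1)" "u = (q',w1)" "{q1,q'} \<in> edges (Qgraph G)"
        using Pedge_cases by blast
      then show "u \<in> {u. (\<exists>v. q = Inl v) \<and> u \<in> (\<lambda>w'. (q,w')) ` AH} \<union> (\<lambda>q'. (q',w)) ` BQ"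
      proof cases
        case x
        then have "rH w < rH w'" "q = Inl v" "w1 = w" using lt pq unfolding key_def by auto
        then show ?thesis using x Hsub[OF x(3)] unfolding AH_def by auto
      next
        case y
        then have "rQ q < rQ q'" "q1 = q" "w1 = w" using lt pq unfolding key_def by auto
        then show ?thesis using y unfolding BQ_def by auto
      qed
    qed
    show "card {u. {p,u} \<in> edges (Qprod G H) \<and> key p < key u} \<le> dd"
    proof (cases q)
      case (Inl v)
      have v: "v \<in> verts G" using q Inl unfolding Qgraph_def by auto
      have "card {u. {p,u} \<in> edges (Qprod G H) \<and> key p < key u} \<le> card ((\<lambda>w'. (q,w')) ` AH \<union> (\<lambda>q'. (q',w)) ` BQ)"
        by (rule card_mono) (use finA finB later in auto)
      also have "\<dots> \<le> card ((\<lambda>w'. (q,w')) ` AH) + card ((\<lambda>q'. (q',w)) ` BQ)" by (rule card_Un_le)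
      also have "\<dots> \<le> l + k" using cA cB rQ(2) v Inl unfolding BQ_def by fastforce
      finally show ?thesis unfolding dd_def by simp
    next
      case (Inr e)
      have e: "e \<in> edges G" using q Inr unfolding Qgraph_def by auto
      have "card {u. {p,u} \<in> edges (Qprod G H) \<and> key p < key u} \<le> card ((\<lambda>q'. (q',w)) ` BQ)"
        by (rule card_mono) (use finB later Inr in auto)
      also have "\<dots> \<le> 2 * max_deg G - 2" using cB rQ(3) e Inr unfolding BQ_def by fastforce
      finally show ?thesis unfolding dd_def by simp
    qed
  qed
  show ?thesis using acyclic_AT[OF fin sub dist bound] unfolding dd_def .
qed

end
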